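(* Let $\mu$ be a valuated matroid on $[n]$. (i) Let $f=(f_1,f_2):[n]\cup\{o\}\to([n]\cup\{o\})\times\mathbb{T}$ be a map with $f_2(i)=0$ whenever $f_1(i)\neq o$. Then for any weakly monomial matrix $A_f$ associated to $f$, $\overline{\operatorname{trop}}(f^{-1}(\mu))=\mathrm{val}(A_f)\odot\overline{\operatorname{trop}}(\mu)$. (ii) Conversely, if $A_f\in K^{n\times n}$ is a weakly monomial matrix with entries in $\{0,1\}$, then its associated map $f$ satisfies $\overline{\operatorname{trop}}(f^{-1}(\mu))=\mathrm{val}(A_f)\odot\overline{\operatorname{trop}}(\mu)$.
   Context: $K$ is a field with non-Archimedean valuation $\mathrm{val}:K\to\mathbb{T}=\mathbb{R}\cup\{\infty\}$; $(\mathrm{val}(M)\odot v)_i=\min_j(\mathrm{val}(M_{ij})+v_j)$, applied pointwise to sets. Valuated matroid of rank $r$ on finite $E$: $\nu:\binom{E}{r}\to\mathbb{T}$, not identically $\infty$, with exchange property (for all $I,J$, $i\in I\setminus J$ there is $j\in J\setminus I$ with $\nu(I)+\nu(J)\ge\nu((I\setminus i)\cup j)+\nu((J\setminus j)\cup i)$), up to additive constants; $\overline{\operatorname{trop}}(\nu)\subseteq\mathbb{P}(\mathbb{T}^E)$ is the set of $x$ with $\min_e(C_\nu(I)_e+x_e)$ attained at least twice for all $I\in\binom{E}{r+1}$ with $C_\nu(I)\ne(\infty,\dots)$, where $C_\nu(I)_e=\nu(I\setminus e)$ for $e\in I$, $\infty$ else. Pointed matroid $\mu_o$: $\mu$ extended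 to $[n]\cup\{o\}$ with $o$ a loop. With $S=f_1([n]\cup\{o\})$, the affine induced valuated matroid is $f^{-1}(\mu)(B)=\mu_o|_S(f_1(B))+\sum_{i\in B}f_2(i)$, where $\mu_o|_S$ is the restriction of $\mu_o$ to $S$ and $|B|$ equals its rank (value $\infty$ if $|f_1(B)|$ is too small); $\overline{\operatorname{trop}}(f^{-1}(\mu))$ denotes the projection to the coordinates in $[n]$ of its tropical linear space. Weakly monomial: at most one nonzero entry per row. Associated matrix of $f$ (defined when $f_2(i)\in\mathrm{val}(K)$ for all $i\in[n]$): $(A_f)_{ij}=k_i$ if $f_1(i)=j\in[n]$ with $\mathrm{val}(k_i)=f_2(i)$, and $0$ otherwise. Associated map of a weakly monomial $M$: $f(o)=(o,\infty)$; $f(i)=(o,\infty)$ if row $i$ of $M$ is zero; $f(i)=(j,\mathrm{val}(M_{ij}))$ if $M_{ij}\neq0$. *)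

theory Defs
  imports "HOL-Library.Extended_Real"
begin

text \<open>The tropical semiring T = R \<union> {\<infinity>} is modelled inside ereal, all
  values being required to differ from -\<infinity>. Ground sets are sets of naturals:
  [n] = {1..n} and the extra point o is 0, so [n] \<union> {o} = {0..n}.
  A point of P(T^E) is represented by all of its representatives, i.e. vectors
  x :: nat \<Rightarrow> ereal with entries in T on E, value \<infinity> off E, and not all \<infinity> on E.
  All sets below are closed under adding real constants, so equality of
  representative sets is equality of subsets of P(T^E).\<close>

definition nonarch_val :: "('k::field \<Rightarrow> ereal) \<Rightarrow> bool" where
  "nonarch_val v \<longleftrightarrow> v 0 = \<infinity> \<and> (\<forall>x. x \<noteq> 0 \<longrightarrow> v x \<noteq> \<infinity> \<and> v x \<noteq> -\<infinity>)
     \<and> (\<forall>x y. v (x * y) = v x + v y) \<and> (\<forall>x y. min (v x) (v y) \<le> v (x + y))"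

definition valuated_matroid :: "nat set \<Rightarrow> nat \<Rightarrow> (nat set \<Rightarrow> ereal) \<Rightarrow> bool" where
  "valuated_matroid E r \<nu> \<longleftrightarrow> finite E
     \<and> (\<forall>B. B \<subseteq> E \<and> card B = r \<longrightarrow> \<nu> B \<noteq> -\<infinity>)
     \<and> (\<exists>B. B \<subseteq> E \<and> card B = r \<and> \<nu> B \<noteq> \<infinity>)
     \<and> (\<forall>I J. I \<subseteq> E \<and> card I = r \<and> J \<subseteq> E \<and> card J = r \<longrightarrow>
          (\<forall>i \<in> I - J. \<exists>j \<in> J - I.
             \<nu> ((I - {i}) \<union> {j}) + \<nu> ((J - {j}) \<union> {i}) \<le> \<nu> I + \<nu> J))"

definition tvec :: "nat set \<Rightarrow> (nat \<Rightarrow> ereal) \<Rightarrow> bool" where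
  "tvec E x \<longleftrightarrow> (\<forall>e\<in>E. x e \<noteq> -\<infinity>) \<and> (\<forall>e. e \<notin> E \<longrightarrow> x e = \<infinity>) \<and> (\<exists>e\<in>E. x e \<noteq> \<infinity>)"

definition circ_vec :: "(nat set \<Rightarrow> ereal) \<Rightarrow> nat set \<Rightarrow> nat \<Rightarrow> ereal" where
  "circ_vec \<nu> I e = (if e \<in> I then \<nu> (I - {e}) else \<infinity>)"

definition min_twice :: "nat set \<Rightarrow> (nat \<Rightarrow> ereal) \<Rightarrow> bool" where
  "min_twice E y \<longleftrightarrow> (\<exists>e1\<in>E. \<exists>e2\<in>E. e1 \<noteq> e2 \<and>
       y e1 = (INF e\<in>E. y e) \<and> y e2 = (INF e\<in>E. y e))"

definition trop_bar :: "nat set \<Rightarrow> nat \<Rightarrow> (nat set \<Rightarrow> ereal) \<Rightarrow> (nat \<Rightarrow> ereal) set" where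
  "trop_bar E r \<nu> = {x. tvec E x \<and>
     (\<forall>I. I \<subseteq> E \<and> card I = r + 1 \<and> (\<exists>e\<in>E. circ_vec \<nu> I e \<noteq> \<infinity>) \<longrightarrow>
        min_twice E (\<lambda>e. circ_vec \<nu> I e + x e))}"

text \<open>Pointed matroid: extension by the loop o = 0.\<close>
definition pointed :: "(nat set \<Rightarrow> ereal) \<Rightarrow> nat set \<Rightarrow> ereal" where
  "pointed \<mu> B = (if 0 \<in> B then \<infinity> else \<mu> B)"

definition restr_rank :: "nat set \<Rightarrow> nat \<Rightarrow> (nat set \<Rightarrow> ereal) \<Rightarrow> nat set \<Rightarrow> nat" where
  "restr_rank E r \<nu> S = Max {card (B \<inter> S) | B. B \<subseteq> E \<and> card B = r \<and> \<nu> B \<noteq> \<infinity>}"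

text \<open>Restriction (deletion of E - S) of a valuated matroid, evaluated on subsets of S
  of size restr_rank E r \<nu> S.\<close>
definition restr :: "nat set \<Rightarrow> nat \<Rightarrow> (nat set \<Rightarrow> ereal) \<Rightarrow> nat set \<Rightarrow> nat set \<Rightarrow> ereal" where
  "restr E r \<nu> S A = (INF C \<in> {C. C \<subseteq> E - S \<and> card C = r - restr_rank E r \<nu> S}. \<nu> (A \<union> C))"

text \<open>Affine induced valuated matroid f^{-1}(\<mu>) on {0..n} for f = (f1, f2),
  where \<mu> has rank r on {1..n}; its rank is the rank of \<mu>_o restricted to S.\<close>
definition ind_rank :: "nat \<Rightarrow> nat \<Rightarrow> (nat set \<Rightarrow> ereal) \<Rightarrow> (nat \<Rightarrow> nat) \<Rightarrow> nat" where
  "ind_rank n r \<mu> f1 = restr_rank {0..n} r (pointed \<mu>) (f1 ` {0..n})"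

definition induced :: "nat \<Rightarrow> nat \<Rightarrow> (nat set \<Rightarrow> ereal) \<Rightarrow> (nat \<Rightarrow> nat) \<Rightarrow> (nat \<Rightarrow> ereal)
    \<Rightarrow> nat set \<Rightarrow> ereal" where
  "induced n r \<mu> f1 f2 B =
     (if card (f1 ` B) < ind_rank n r \<mu> f1 then \<infinity>
      else restr {0..n} r (pointed \<mu>) (f1 ` {0..n}) (f1 ` B) + (\<Sum>i\<in>B. f2 i))"

text \<open>Projection of trop_bar(f^{-1}(\<mu>)) to the coordinates in [n].\<close>
definition trop_induced :: "nat \<Rightarrow> nat \<Rightarrow> (nat set \<Rightarrow> ereal) \<Rightarrow> (nat \<Rightarrow> nat) \<Rightarrow> (nat \<Rightarrow> ereal)
    \<Rightarrow> (nat \<Rightarrow> ereal) set" where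
  "trop_induced n r \<mu> f1 f2 =
     {y. tvec {1..n} y \<and>
         (\<exists>x \<in> trop_bar {0..n} (ind_rank n r \<mu> f1) (induced n r \<mu> f1 f2). y = x(0 := \<infinity>))}"

text \<open>Tropical matrix-vector product val(M) \<odot> x, and its pointwise image on a set
  (points whose image is the all-\<infinity> vector are not points of P(T^n)).\<close>
definition tmult :: "('k \<Rightarrow> ereal) \<Rightarrow> nat \<Rightarrow> (nat \<Rightarrow> nat \<Rightarrow> 'k) \<Rightarrow> (nat \<Rightarrow> ereal) \<Rightarrow> nat \<Rightarrow> ereal" where
  "tmult v n M x = (\<lambda>i. if i \<in> {1..n} then (INF j\<in>{1..n}. v (M i j) + x j) else \<infinity>)"

definition tmult_set :: "('k \<Rightarrow> ereal) \<Rightarrow> nat \<Rightarrow> (nat \<Rightarrow> nat \<Rightarrow> 'k) \<Rightarrow> (nat \<Rightarrow> ereal) set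
    \<Rightarrow> (nat \<Rightarrow> ereal) set" where
  "tmult_set v n M X = {y. tvec {1..n} y \<and> (\<exists>x\<in>X. y = tmult v n M x)}"

definition weakly_monomial :: "nat \<Rightarrow> (nat \<Rightarrow> nat \<Rightarrow> 'k::zero) \<Rightarrow> bool" where
  "weakly_monomial n M \<longleftrightarrow>
     (\<forall>i\<in>{1..n}. \<forall>j\<in>{1..n}. \<forall>j'\<in>{1..n}. M i j \<noteq> 0 \<and> M i j' \<noteq> 0 \<longrightarrow> j = j')"

definition assoc_matrix :: "('k::zero \<Rightarrow> ereal) \<Rightarrow> nat \<Rightarrow> (nat \<Rightarrow> nat) \<Rightarrow> (nat \<Rightarrow> ereal)
    \<Rightarrow> (nat \<Rightarrow> nat \<Rightarrow> 'k) \<Rightarrow> bool" where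
  "assoc_matrix v n f1 f2 M \<longleftrightarrow> (\<forall>i\<in>{1..n}. f2 i \<in> range v) \<and>
     (\<forall>i\<in>{1..n}. \<forall>j\<in>{1..n}. (f1 i = j \<longrightarrow> v (M i j) = f2 i) \<and> (f1 i \<noteq> j \<longrightarrow> M i j = 0))"

definition assoc_f1 :: "nat \<Rightarrow> (nat \<Rightarrow> nat \<Rightarrow> 'k::zero) \<Rightarrow> nat \<Rightarrow> nat" where
  "assoc_f1 n M i = (if i \<in> {1..n} \<and> (\<exists>j\<in>{1..n}. M i j \<noteq> 0)
                     then (THE j. j \<in> {1..n} \<and> M i j \<noteq> 0) else 0)"

definition assoc_f2 :: "('k::zero \<Rightarrow> ereal) \<Rightarrow> nat \<Rightarrow> (nat \<Rightarrow> nat \<Rightarrow> 'k) \<Rightarrow> nat \<Rightarrow> ereal" where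
  "assoc_f2 v n M i = (if i \<in> {1..n} \<and> (\<exists>j\<in>{1..n}. M i j \<noteq> 0)
                       then v (M i (assoc_f1 n M i)) else \<infinity>)"

end

theory Submission
  imports Defs
begin


definition tcond :: "nat set \<Rightarrow> nat \<Rightarrow> (nat set \<Rightarrow> ereal) \<Rightarrow> (nat \<Rightarrow> ereal) \<Rightarrow> bool" where
  "tcond E r \<nu> x \<longleftrightarrow> (\<forall>I. I \<subseteq> E \<and> card I = r + 1 \<and> (\<exists>e\<in>E. circ_vec \<nu> I e \<noteq> \<infinity>) \<longrightarrow>
        min_twice E (\<lambda>e. circ_vec \<nu> I e + x e))"

lemma trop_bar_iff: "x \<in> trop_bar E r \<nu> \<longleftrightarrow> tvec E x \<and> tcond E r \<nu> x"
  by (simp add: trop_bar_def tcond_def)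

lemma mt_alt: "min_twice E y \<longleftrightarrow> (\<exists>e1\<in>E. \<exists>e2\<in>E. e1 \<noteq> e2 \<and> y e1 = y e2 \<and> (\<forall>e\<in>E. y e1 \<le> y e))"
proof
  assume "min_twice E y"
  then obtain e1 e2 where "e1\<in>E" "e2\<in>E" "e1 \<noteq> e2" "y e1 = (INF e\<in>E. y e)" "y e2 = (INF e\<in>E. y e)"
    unfolding min_twice_def by blast
  then show "\<exists>e1\<in>E. \<exists>e2\<in>E. e1 \<noteq> e2 \<and> y e1 = y e2 \<and> (\<forall>e\<in>E. y e1 \<le> y e)"
    by (metis INF_lower)
next
  assume "\<exists>e1\<in>E. \<exists>e2\<in>E. e1 \<noteq> e2 \<and> y e1 = y e2 \<and> (\<forall>e\<in>E. y e1 \<le> y e)"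
  then obtain e1 e2 where h: "e1\<in>E" "e2\<in>E" "e1 \<noteq> e2" "y e1 = y e2" "\<forall>e\<in>E. y e1 \<le> y e" by blast
  have "(INF e\<in>E. y e) = y e1"
    by (rule antisym) (use h in \<open>auto intro: INF_lower INF_greatest\<close>)
  then show "min_twice E y" unfolding min_twice_def using h by metis
qed

lemma INF_attained:
  assumes "finite A" "A \<noteq> {}"
  shows "\<exists>a\<in>A. (INF x\<in>A. f x) = (f a :: ereal)"
  using assms
proof (induction A rule: finite_ne_induct)
  case (singleton x) then show ?case by simp
next
  case (insert x F)
  then obtain a where a: "a \<in> F" "(INF x\<in>F. f x) = f a" by blast
  show ?case
  proof (cases "f x \<le> f a")
    case True then show ?thesis using a by (simp add: inf_absorb1)
  next
    case False
    then have "f a \<le> f x" by simp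
    then show ?thesis using a by (auto simp add: inf_absorb2)
  qed
qed

lemma min_attained:
  assumes "finite E" "E \<noteq> {}"
  obtains e0 where "e0 \<in> E" "\<forall>e\<in>E. (y e0 :: ereal) \<le> y e"
  using INF_attained[OF assms, of y] by (metis INF_lower)

lemma not_min_twice:
  assumes "e0 \<in> E" "\<forall>e\<in>E - {e0}. y e > y e0"
  shows "\<not> min_twice E y"
proof
  assume "min_twice E y"
  then obtain e1 e2 where h: "e1\<in>E" "e2\<in>E" "e1 \<noteq> e2" "y e1 = y e2" "\<forall>e\<in>E. y e1 \<le> y e"
    unfolding mt_alt by blast
  show False
  proof (cases "e1 = e0")
    case True
    then have "e2 \<in> E - {e0}" using h by auto
    then have "y e2 > y e0" using assms by blast
    then show False using h True by simp
  next
    case False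
    then have "e1 \<in> E - {e0}" using h by auto
    then have "y e1 > y e0" using assms by blast
    then show False using h assms(1) by (meson leD)
  qed
qed

lemma tcond_INF:
  assumes fin: "finite E" "finite K" "K \<noteq> {}" and g: "\<forall>k\<in>K. tcond E r \<nu> (g k)"
  shows "tcond E r \<nu> (\<lambda>e. INF k\<in>K. g k e)"
  unfolding tcond_def
proof (intro allI impI)
  fix I assume I: "I \<subseteq> E \<and> card I = r + 1 \<and> (\<exists>e\<in>E. circ_vec \<nu> I e \<noteq> \<infinity>)"
  define z where "z = (\<lambda>e. INF k\<in>K. g k e)"
  have "I \<noteq> {}" using I by auto
  then have "E \<noteq> {}" using I by auto
  then obtain e0 where e0: "e0 \<in> E" "\<forall>e\<in>E. circ_vec \<nu> I e0 + z e0 \<le> circ_vec \<nu> I e + z e"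
    using min_attained[OF fin(1) \<open>E \<noteq> {}\<close>, of "\<lambda>e. circ_vec \<nu> I e + z e"] by blast
  obtain k where k: "k \<in> K" "z e0 = g k e0"
    using INF_attained[OF fin(2,3)] unfolding z_def by metis
  have "min_twice E (\<lambda>e. circ_vec \<nu> I e + g k e)" using g k I unfolding tcond_def by blast
  then obtain e1 e2 where h: "e1\<in>E" "e2\<in>E" "e1 \<noteq> e2"
      "circ_vec \<nu> I e1 + g k e1 = circ_vec \<nu> I e2 + g k e2"
      "\<forall>e\<in>E. circ_vec \<nu> I e1 + g k e1 \<le> circ_vec \<nu> I e + g k e"
    unfolding mt_alt by blast
  have le: "circ_vec \<nu> I e + z e \<le> circ_vec \<nu> I e + g k e" for e
    using k(1) unfolding z_def by (intro add_left_mono INF_lower)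
  have a1: "circ_vec \<nu> I e1 + z e1 = circ_vec \<nu> I e0 + z e0"
    by (metis (no_types, lifting) antisym e0 h(1,5) k(2) le order_trans)
  have a2: "circ_vec \<nu> I e2 + z e2 = circ_vec \<nu> I e0 + z e0"
    by (metis (no_types, lifting) antisym e0 h(2,4,5) k(2) le order_trans)
  have "\<forall>e\<in>E. circ_vec \<nu> I e1 + z e1 \<le> circ_vec \<nu> I e + z e" using a1 e0 by simp
  then have "min_twice E (\<lambda>e. circ_vec \<nu> I e + z e)"
    unfolding mt_alt using h(1-3) a1 a2 by (intro bexI[of _ e1] bexI[of _ e2]) auto
  then show "min_twice E (\<lambda>e. circ_vec \<nu> I e + (INF k\<in>K. g k e))" by (simp add: z_def)
qed

lemma tcond_shift:
  assumes "tcond E r \<nu> g"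
  shows "tcond E r \<nu> (\<lambda>e. c + g e)"
  unfolding tcond_def
proof (intro allI impI)
  fix I assume I: "I \<subseteq> E \<and> card I = r + 1 \<and> (\<exists>e\<in>E. circ_vec \<nu> I e \<noteq> \<infinity>)"
  then obtain e1 e2 where h: "e1\<in>E" "e2\<in>E" "e1 \<noteq> e2"
      "circ_vec \<nu> I e1 + g e1 = circ_vec \<nu> I e2 + g e2"
      "\<forall>e\<in>E. circ_vec \<nu> I e1 + g e1 \<le> circ_vec \<nu> I e + g e"
    using assms unfolding tcond_def mt_alt by blast
  have eq: "circ_vec \<nu> I e + (c + g e) = c + (circ_vec \<nu> I e + g e)" for e
    by (simp add: ac_simps)
  show "min_twice E (\<lambda>e. circ_vec \<nu> I e + (c + g e))"
    unfolding mt_alt eq using h by (metis add_left_mono)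
qed

lemma tcond_top:
  assumes "\<forall>e. g e = \<infinity>" "r \<ge> 1"
  shows "tcond E r \<nu> g"
  unfolding tcond_def
proof (intro allI impI)
  fix I assume I: "I \<subseteq> E \<and> card I = r + 1 \<and> (\<exists>e\<in>E. circ_vec \<nu> I e \<noteq> \<infinity>)"
  then have "card I \<ge> 2" using assms by simp
  then have fI: "finite I" "I \<noteq> {}" by (auto intro: card_ge_0_finite)
  then obtain a where a: "a \<in> I" by blast
  have "card (I - {a}) \<ge> 1" using \<open>card I \<ge> 2\<close> a fI by simp
  then have "I - {a} \<noteq> {}" by (metis card.empty not_one_le_zero)
  then obtain b where "b \<in> I - {a}" by blast
  then have "a \<in> I" "b \<in> I" "a \<noteq> b" using a by auto
  then show "min_twice E (\<lambda>e. circ_vec \<nu> I e + g e)"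
    unfolding mt_alt using I assms by auto
qed




definition cocirc :: "nat set \<Rightarrow> (nat set \<Rightarrow> ereal) \<Rightarrow> nat set \<Rightarrow> nat \<Rightarrow> ereal" where
  "cocirc E \<mu> J e = (if e \<in> E \<and> e \<notin> J then \<mu> (insert e J) else \<infinity>)"

lemma coc_tcond:
  assumes vm: "valuated_matroid E r \<mu>" and J: "J \<subseteq> E" "card J + 1 = r"
  shows "tcond E r \<mu> (cocirc E \<mu> J)"
  unfolding tcond_def
proof (intro allI impI)
  fix I assume I: "I \<subseteq> E \<and> card I = r + 1 \<and> (\<exists>e\<in>E. circ_vec \<mu> I e \<noteq> \<infinity>)"
  define y where "y = (\<lambda>e. circ_vec \<mu> I e + cocirc E \<mu> J e)"
  have finE: "finite E" using vm unfolding valuated_matroid_def by blast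
  have "card I \<ge> 2" using I J by simp
  then have fI: "finite I" "I \<noteq> {}" by (auto intro: card_ge_0_finite)
  then obtain a where a: "a \<in> I" by blast
  have "card (I - {a}) \<ge> 1" using \<open>card I \<ge> 2\<close> a fI by simp
  then have "I - {a} \<noteq> {}" by (metis card.empty not_one_le_zero)
  then obtain b where b: "b \<in> I - {a}" by blast
  have "E \<noteq> {}" using I a by auto
  then obtain e0 where e0: "e0 \<in> E" "\<forall>e\<in>E. y e0 \<le> y e"
    using min_attained[OF finE] by blast
  show "min_twice E (\<lambda>e. circ_vec \<mu> I e + cocirc E \<mu> J e)"
  proof (cases "y e0 = \<infinity>")
    case True
    then have "\<forall>e\<in>E. y e = \<infinity>" using e0 by (metis ereal_infty_less_eq(1))
    moreover have "a \<in> E" "b \<in> E" "a \<noteq> b" using a b I by auto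
    ultimately have "min_twice E y" unfolding mt_alt
      by (intro bexI[of _ a] bexI[of _ b]) auto
    then show ?thesis by (simp add: y_def)
  next
    case False
    then have e0I: "e0 \<in> I" and e0J: "e0 \<notin> J" and f1: "\<mu> (I - {e0}) \<noteq> \<infinity>"
      and f2: "\<mu> (insert e0 J) \<noteq> \<infinity>"
      unfolding y_def circ_vec_def cocirc_def by (auto split: if_splits)
    have ex: "\<forall>I J. I \<subseteq> E \<and> card I = r \<and> J \<subseteq> E \<and> card J = r \<longrightarrow>
          (\<forall>i \<in> I - J. \<exists>j \<in> J - I.
             \<mu> ((I - {i}) \<union> {j}) + \<mu> ((J - {j}) \<union> {i}) \<le> \<mu> I + \<mu> J)"
      using vm unfolding valuated_matroid_def by blast
    have finJ: "finite J" using J finE by (meson finite_subset)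
    have c1: "card (insert e0 J) = r" using J e0J finJ by simp
    have c2: "card (I - {e0}) = r" using I e0I fI by simp
    have s1: "insert e0 J \<subseteq> E" "I - {e0} \<subseteq> E" using J e0 I by auto
    have "e0 \<in> insert e0 J - (I - {e0})" by simp
    then obtain j where j: "j \<in> (I - {e0}) - insert e0 J"
      and le: "\<mu> ((insert e0 J - {e0}) \<union> {j}) + \<mu> ((I - {e0} - {j}) \<union> {e0})
               \<le> \<mu> (insert e0 J) + \<mu> (I - {e0})"
      using ex c1 c2 s1 by blast
    have q1: "(insert e0 J - {e0}) \<union> {j} = insert j J" using e0J by auto
    have q2: "(I - {e0} - {j}) \<union> {e0} = I - {j}" using e0I j by auto
    have jE: "j \<in> E" using j I by auto
    have yj: "y j = \<mu> (I - {j}) + \<mu> (insert j J)"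
      using j jE unfolding y_def circ_vec_def cocirc_def by auto
    have ye0: "y e0 = \<mu> (I - {e0}) + \<mu> (insert e0 J)"
      using e0I e0J e0 unfolding y_def circ_vec_def cocirc_def by auto
    have "y j \<le> y e0" using le unfolding q1 q2 yj ye0 by (simp add: ac_simps)
    then have "y j = y e0" using e0 jE by (simp add: antisym)
    then have "min_twice E y" unfolding mt_alt using e0 jE j
      by (intro bexI[of _ e0] bexI[of _ j]) auto
    then show ?thesis by (simp add: y_def)
  qed
qed




lemma fin_real: "(a::ereal) \<noteq> \<infinity> \<Longrightarrow> a \<noteq> -\<infinity> \<Longrightarrow> a = ereal (real_of_ereal a)"
  by (cases a) auto

lemma tcondD:
  assumes "tcond E r \<nu> x" "I \<subseteq> E" "card I = r + 1" "e \<in> E" "circ_vec \<nu> I e \<noteq> \<infinity>"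
  shows "min_twice E (\<lambda>e. circ_vec \<nu> I e + x e)"
  using assms unfolding tcond_def by blast

lemma span:
  assumes finE: "finite E"
    and nmi: "\<forall>B. B \<subseteq> E \<and> card B = \<rho> \<longrightarrow> \<nu> B \<noteq> -\<infinity>"
    and exB: "\<exists>B. B \<subseteq> E \<and> card B = \<rho> \<and> \<nu> B \<noteq> \<infinity>"
    and x: "tcond E \<rho> \<nu> x" and xm: "\<forall>e\<in>E. x e \<noteq> -\<infinity>"
    and e: "e \<in> E" "x e \<noteq> \<infinity>"
  shows "\<exists>J. J \<subseteq> E \<and> e \<notin> J \<and> card J + 1 = \<rho> \<and> \<nu> (insert e J) \<noteq> \<infinity> \<and>
            (\<forall>f\<in>E - J. x f + \<nu> (insert e J) \<le> \<nu> (insert f J) + x e)"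
proof -
  define Z where "Z = {f\<in>E. x f = \<infinity>}"
  define Bs where "Bs = {B. B \<subseteq> E \<and> card B = \<rho> \<and> \<nu> B \<noteq> \<infinity>}"
  have finBs: "finite Bs" using finE unfolding Bs_def
    by (rule finite_subset[rotated, OF finite_Pow_iff[THEN iffD2]]) auto
  have neBs: "Bs \<noteq> {}" using exB unfolding Bs_def by blast
  define k where "k = Max ((\<lambda>B. card (B \<inter> Z)) ` Bs)"
  have kmax: "card (B \<inter> Z) \<le> k" if "B \<in> Bs" for B
    unfolding k_def using finBs that by (intro Max_ge) auto
  define Bk where "Bk = {B\<in>Bs. card (B \<inter> Z) = k}"
  have "k \<in> (\<lambda>B. card (B \<inter> Z)) ` Bs" unfolding k_def using finBs neBs by (intro Max_in) auto
  then have neBk: "Bk \<noteq> {}" unfolding Bk_def by auto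
  have finBk: "finite Bk" using finBs unfolding Bk_def by auto
  define xr where "xr = (\<lambda>f. real_of_ereal (x f))"
  define w where "w = (\<lambda>B. real_of_ereal (\<nu> B) - (\<Sum>b\<in>B - Z. xr b))"
  have nuB: "\<exists>a. \<nu> B = ereal a" if "B \<in> Bs" for B
    using that nmi unfolding Bs_def by (cases "\<nu> B") auto
  have xE: "\<exists>a. x f = ereal a" if "f \<in> E" "f \<notin> Z" for f
    using that xm unfolding Z_def by (cases "x f") auto
  have finB: "finite B" if "B \<subseteq> E" for B using finE that by (rule finite_subset[rotated])
  have "Min (w ` Bk) \<in> w ` Bk" using finBk neBk by (intro Min_in) auto
  then obtain B0 where B0: "B0 \<in> Bk" "w B0 = Min (w ` Bk)" by auto
  have B0min: "w B0 \<le> w B" if "B \<in> Bk" for B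
    using B0 finBk that by simp
  have eZ: "e \<notin> Z" using e unfolding Z_def by auto
  have ex_e: "\<exists>B\<in>Bk. w B = w B0 \<and> e \<in> B"
  proof (rule ccontr)
    assume nex: "\<not> ?thesis"
    have eB0: "e \<notin> B0" using nex B0 by blast
    have B0s: "B0 \<subseteq> E" "card B0 = \<rho>" "\<nu> B0 \<noteq> \<infinity>" "card (B0 \<inter> Z) = k"
      using B0 unfolding Bk_def Bs_def by auto
    define I where "I = insert e B0"
    have IE: "I \<subseteq> E" using B0s e unfolding I_def by auto
    have cI: "card I = \<rho> + 1" using B0s eB0 finB[OF B0s(1)] unfolding I_def by simp
    have Ie: "I - {e} = B0" using eB0 unfolding I_def by auto
    have ce: "circ_vec \<nu> I e = \<nu> B0" unfolding circ_vec_def Ie using I_def by simp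
    define y where "y = (\<lambda>f. circ_vec \<nu> I f + x f)"
    have "min_twice E y" unfolding y_def using tcondD[OF x IE cI e(1)] ce B0s by simp
    moreover have "\<not> min_twice E y"
    proof (rule not_min_twice[OF e(1)], intro ballI)
      fix f assume f: "f \<in> E - {e}"
      have B0Bs: "B0 \<in> Bs" using B0 unfolding Bk_def by simp
      obtain a where a: "\<nu> B0 = ereal a" using nuB[OF B0Bs] by blast
      obtain b where b: "x e = ereal b" using xE[OF e(1) eZ] by blast
      have ye: "y e = ereal (real_of_ereal (\<nu> B0) + xr e)"
        unfolding y_def ce xr_def using a b by simp
      show "y e < y f"
      proof (cases "f \<in> I")
        case False
        then have "y f = \<infinity>" unfolding y_def circ_vec_def by simp
        then show ?thesis using ye by simp
      next
        case True
        then have fB0: "f \<in> B0" using f unfolding I_def by auto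
        show ?thesis
        proof (cases "f \<in> Z")
          case True
          then have "x f = \<infinity>" unfolding Z_def by simp
          then have "y f = \<infinity>" unfolding y_def by simp
          then show ?thesis using ye by simp
        next
          case False
          note fZ = False
          show ?thesis
          proof (cases "\<nu> (I - {f}) = \<infinity>")
            case True
            then have "y f = \<infinity>" unfolding y_def circ_vec_def using \<open>f \<in> I\<close> by simp
            then show ?thesis using ye by simp
          next
            case False
            define B' where "B' = I - {f}"
            have B'Bs: "B' \<in> Bs" unfolding Bs_def B'_def using IE cI False \<open>f \<in> I\<close>
              finB[OF IE] by auto
            have "B' \<inter> Z = B0 \<inter> Z" unfolding B'_def I_def using eZ fZ by auto
            then have B'Bk: "B' \<in> Bk" using B'Bs B0s unfolding Bk_def by simp
            have eB': "e \<in> B'" unfolding B'_def I_def using f by auto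
            have "w B' \<ge> w B0" using B0min B'Bk by simp
            moreover have "w B' \<noteq> w B0" using nex B'Bk eB' by metis
            ultimately have wlt: "w B' > w B0" by simp
            have B'Z: "B' - Z = insert e ((B0 - Z) - {f})" unfolding B'_def I_def using eZ fZ f by auto
            have finB0Z: "finite (B0 - Z)" using finB[OF B0s(1)] by simp
            have sB': "(\<Sum>b\<in>B' - Z. xr b) = xr e + ((\<Sum>b\<in>B0 - Z. xr b) - xr f)"
              unfolding B'Z using finB0Z eB0 fB0 fZ by (simp add: sum_diff1)
            have "real_of_ereal (\<nu> B') + xr f > real_of_ereal (\<nu> B0) + xr e"
              using wlt unfolding w_def sB' by simp
            moreover have "y f = ereal (real_of_ereal (\<nu> B') + xr f)"
            proof -
              obtain a where a: "\<nu> B' = ereal a" using nuB[OF B'Bs] by blast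
              obtain b where b: "x f = ereal b" using xE[of f] f fZ by blast
              show ?thesis unfolding y_def circ_vec_def xr_def using \<open>f \<in> I\<close> a b
                unfolding B'_def by simp
            qed
            ultimately show ?thesis using ye by simp
          qed
        qed
      qed
    qed
    ultimately show False by simp
  qed
  then obtain B where B: "B \<in> Bk" "w B = w B0" "e \<in> B" by blast
  have Bs': "B \<subseteq> E" "card B = \<rho>" "\<nu> B \<noteq> \<infinity>" "card (B \<inter> Z) = k"
    using B unfolding Bk_def Bs_def by auto
  have finBB: "finite B" using finB[OF Bs'(1)] .
  define J where "J = B - {e}"
  have iJ: "insert e J = B" using B unfolding J_def by auto
  have cJ: "card J + 1 = \<rho>" using Bs' B finBB unfolding J_def
    by (metis Suc_eq_plus1 card_Suc_Diff1)
  have main: "x f + \<nu> B \<le> \<nu> (insert f J) + x e" if f: "f \<in> E - J" for f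
  proof (cases "f = e")
    case True
    then show ?thesis using iJ by (simp add: add.commute)
  next
    case False
    then have fB: "f \<notin> B" using f unfolding J_def by auto
    show ?thesis
    proof (cases "\<nu> (insert f J) = \<infinity>")
      case True then show ?thesis by simp
    next
      case False
      define B' where "B' = insert f J"
      have fJ: "f \<notin> J" using fB unfolding J_def by auto
      have finJ: "finite J" using finBB unfolding J_def by simp
      have B'Bs: "B' \<in> Bs" unfolding Bs_def B'_def using False f Bs'(1) cJ fJ finJ
        unfolding J_def by auto
      have fZ: "f \<notin> Z"
      proof
        assume fZ: "f \<in> Z"
        have "B' \<inter> Z = insert f (B \<inter> Z)" unfolding B'_def J_def using fZ eZ by auto
        then have "card (B' \<inter> Z) = k + 1" using Bs'(4) fB finBB by simp
        then show False using kmax[OF B'Bs] by simp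
      qed
      have "B' \<inter> Z = B \<inter> Z" unfolding B'_def J_def using fZ eZ B by auto
      then have B'Bk: "B' \<in> Bk" using B'Bs Bs' unfolding Bk_def by simp
      have "w B' \<ge> w B" using B0min[OF B'Bk] B by simp
      moreover have "B' - Z = insert f (J - Z)" unfolding B'_def using fZ by auto
      moreover have "B - Z = insert e (J - Z)" using iJ eZ by auto
      ultimately have "real_of_ereal (\<nu> B') - xr f \<ge> real_of_ereal (\<nu> B) - xr e"
        unfolding w_def using finJ fJ by (simp add: J_def)
      then have "xr f + real_of_ereal (\<nu> B) \<le> real_of_ereal (\<nu> B') + xr e" by simp
      moreover obtain a1 where a1: "x f = ereal a1" using xE f fZ by blast
      moreover obtain a2 where a2: "x e = ereal a2" using xE e eZ by blast
      moreover obtain a3 where a3: "\<nu> B = ereal a3" using nuB B unfolding Bk_def by blast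
      moreover obtain a4 where a4: "\<nu> B' = ereal a4" using nuB B'Bs by blast
      ultimately show ?thesis unfolding B'_def xr_def by simp
    qed
  qed
  show ?thesis
    using Bs' iJ cJ main by (intro exI[of _ J]) (auto simp: J_def)
qed





lemma INF_nmi:
  assumes "finite A" "A \<noteq> {}" "\<forall>a\<in>A. f a \<noteq> -\<infinity>"
  shows "(INF a\<in>A. f a) \<noteq> (-\<infinity>::ereal)"
  using INF_attained[OF assms(1,2), of f] assms(3) by auto

locale indsetup =
  fixes n r :: nat and \<mu> :: "nat set \<Rightarrow> ereal" and f1 :: "nat \<Rightarrow> nat" and f2 :: "nat \<Rightarrow> ereal"
  assumes vm: "valuated_matroid {1..n} r \<mu>"
    and f1r: "\<forall>i\<in>{0..n}. f1 i \<in> {0..n}"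
    and f2m: "\<forall>i\<in>{0..n}. f2 i \<noteq> -\<infinity>"
    and f2z: "\<forall>i\<in>{0..n}. f1 i \<noteq> 0 \<longrightarrow> f2 i = 0"
begin

abbreviation "E0 \<equiv> {0..n}"
abbreviation "E1 \<equiv> {1..n}"
abbreviation "S \<equiv> f1 ` {0..n}"
abbreviation "\<rho> \<equiv> ind_rank n r \<mu> f1"
abbreviation "\<nu> \<equiv> induced n r \<mu> f1 f2"
abbreviation "pm \<equiv> pointed \<mu>"
abbreviation "CC \<equiv> {C. C \<subseteq> {0..n} - f1 ` {0..n} \<and> card C = r - ind_rank n r \<mu> f1}"

abbreviation "RS \<equiv> {card (B \<inter> S) | B. B \<subseteq> E0 \<and> card B = r \<and> pm B \<noteq> \<infinity>}"

lemma rho_def: "\<rho> = Max RS"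
  unfolding ind_rank_def restr_rank_def by simp

lemma sub_E1: "X \<subseteq> E0 \<Longrightarrow> 0 \<notin> X \<Longrightarrow> X \<subseteq> E1"
proof
  fix x assume "X \<subseteq> E0" "0 \<notin> X" "x \<in> X"
  then have a: "x \<le> n" by auto
  have "x \<noteq> 0" using \<open>0 \<notin> X\<close> \<open>x \<in> X\<close> by metis
  then have b: "0 < x" by simp
  from a b show "x \<in> E1" by (simp add: Suc_le_eq)
qed

lemma pm_E1: "0 \<notin> X \<Longrightarrow> pm X = \<mu> X"
  unfolding pointed_def by simp

lemma pm_0: "0 \<in> X \<Longrightarrow> pm X = \<infinity>"
  unfolding pointed_def by simp

lemma mu_nmi: "X \<subseteq> E1 \<Longrightarrow> card X = r \<Longrightarrow> \<mu> X \<noteq> -\<infinity>"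
  using vm unfolding valuated_matroid_def by blast

lemma pm_nmi: "X \<subseteq> E0 \<Longrightarrow> card X = r \<Longrightarrow> pm X \<noteq> -\<infinity>"
proof (cases "0 \<in> X")
  case True then show ?thesis by (simp add: pm_0)
next
  case False
  assume "X \<subseteq> E0" "card X = r"
  then have "X \<subseteq> E1" using False sub_E1 by blast
  then show ?thesis using mu_nmi \<open>card X = r\<close> False by (simp add: pm_E1)
qed

lemma finRS: "finite RS"
proof -
  have "RS \<subseteq> (\<lambda>B. card (B \<inter> S)) ` Pow E0" by auto
  then show ?thesis by (rule finite_subset) simp
qed

lemma exB0: "\<exists>B. B \<subseteq> E1 \<and> card B = r \<and> \<mu> B \<noteq> \<infinity>"
  using vm unfolding valuated_matroid_def by blast

lemma neRS: "RS \<noteq> {}"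
proof -
  obtain B where B: "B \<subseteq> E1" "card B = r" "\<mu> B \<noteq> \<infinity>" using exB0 by blast
  then have "0 \<notin> B" by auto
  then have "pm B \<noteq> \<infinity>" using B by (simp add: pm_E1)
  moreover have "B \<subseteq> E0" using B by auto
  ultimately show ?thesis using B by blast
qed

lemma rho_ge: "B \<subseteq> E0 \<Longrightarrow> card B = r \<Longrightarrow> pm B \<noteq> \<infinity> \<Longrightarrow> card (B \<inter> S) \<le> \<rho>"
  unfolding rho_def using finRS by (intro Max_ge) auto

lemma exBm: "\<exists>B. B \<subseteq> E1 \<and> card B = r \<and> \<mu> B \<noteq> \<infinity> \<and> card (B \<inter> S) = \<rho>"
proof -
  have "\<rho> \<in> RS" unfolding rho_def using finRS neRS by (rule Max_in)
  then obtain B where B: "B \<subseteq> E0" "card B = r" "pm B \<noteq> \<infinity>" "card (B \<inter> S) = \<rho>" by auto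
  then have "0 \<notin> B" using pm_0 by blast
  then have "B \<subseteq> E1" using B sub_E1 by blast
  then show ?thesis using B \<open>0 \<notin> B\<close> by (intro exI[of _ B]) (auto simp: pm_E1)
qed

lemma rho_le: "\<rho> \<le> r"
proof -
  obtain B where B: "B \<subseteq> E1" "card B = r" "card (B \<inter> S) = \<rho>" using exBm by blast
  have "finite B" using B(1) by (rule finite_subset) simp
  then have "card (B \<inter> S) \<le> card B" by (intro card_mono) auto
  then show ?thesis using B by simp
qed

lemma CC_fin: "finite CC"
proof -
  have "CC \<subseteq> Pow E0" by auto
  then show ?thesis by (rule finite_subset) simp
qed

lemma CC_ne: "CC \<noteq> {}"
proof -
  obtain B where B: "B \<subseteq> E1" "card B = r" "card (B \<inter> S) = \<rho>" using exBm by blast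
  have fB: "finite B" using B(1) by (rule finite_subset) simp
  have "card (B - S) = card B - card (B \<inter> S)"
    using fB by (metis card_Diff_subset_Int finite_Int)
  then have "B - S \<in> CC" using B by auto
  then show ?thesis by blast
qed

lemma restr_eq: "restr E0 r pm S A = (INF C\<in>CC. pm (A \<union> C))"
  unfolding restr_def ind_rank_def by simp

lemma nu_eq: "\<nu> B = (if card (f1 ` B) < \<rho> then \<infinity> else (INF C\<in>CC. pm (f1 ` B \<union> C)) + (\<Sum>i\<in>B. f2 i))"
  unfolding induced_def restr_eq[symmetric] by simp

lemma fin0: "B \<subseteq> E0 \<Longrightarrow> finite B"
  by (meson finite_atLeastAtMost finite_subset)

lemma fS: "B \<subseteq> E0 \<Longrightarrow> f1 ` B \<subseteq> S"
  by auto

lemma S_E0: "S \<subseteq> E0" using f1r by (simp add: image_subset_iff)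

lemma CC_props1: "C \<in> CC \<Longrightarrow> C \<subseteq> E0 - S"
  by (simp only: mem_Collect_eq)
lemma CC_props2: "C \<in> CC \<Longrightarrow> card C = r - \<rho>"
  by (simp only: mem_Collect_eq)
lemma CC_props3: "C \<in> CC \<Longrightarrow> C \<subseteq> E0"
  using CC_props1 by blast
lemma CC_props4: "C \<in> CC \<Longrightarrow> C \<inter> S = {}"
  using CC_props1 by blast
lemma CC_props5: "C \<in> CC \<Longrightarrow> finite C"
  using CC_props3 fin0 by blast
lemma CC_props: "C \<in> CC \<Longrightarrow> C \<subseteq> E0 \<and> C \<inter> S = {} \<and> card C = r - \<rho> \<and> finite C"
proof -
  assume a: "C \<in> CC"
  show ?thesis using CC_props2[OF a] CC_props3[OF a] CC_props4[OF a] CC_props5[OF a] by (intro conjI)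
qed

lemma card_AC: "A \<subseteq> S \<Longrightarrow> C \<in> CC \<Longrightarrow> card (A \<union> C) = card A + (r - \<rho>)"
proof -
  assume A: "A \<subseteq> S" and C: "C \<in> CC"
  have fA: "finite A" using fin0[OF subset_trans[OF A S_E0]] .
  have d: "A \<inter> C = {}" using A CC_props4[OF C] by blast
  show ?thesis using card_Un_disjoint[OF fA CC_props5[OF C] d] CC_props2[OF C] by simp
qed

lemma INF_top: "(INF C\<in>X. (\<infinity>::ereal)) = \<infinity>"
  by (cases "X = {}") (simp_all add: top_ereal_def)

lemma nu_small: "B \<subseteq> E0 \<Longrightarrow> card B < \<rho> \<Longrightarrow> \<nu> B = \<infinity>"
proof -
  assume "B \<subseteq> E0" "card B < \<rho>"
  moreover have "card (f1 ` B) \<le> card B" using fin0[OF \<open>B \<subseteq> E0\<close>] by (rule card_image_le)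
  ultimately show ?thesis by (subst nu_eq) simp
qed

lemma nu_bad: "B \<subseteq> E0 \<Longrightarrow> card B = \<rho> \<Longrightarrow> \<not> inj_on f1 B \<Longrightarrow> \<nu> B = \<infinity>"
proof -
  assume B: "B \<subseteq> E0" "card B = \<rho>" "\<not> inj_on f1 B"
  have "card (f1 ` B) \<le> card B" using fin0[OF B(1)] by (rule card_image_le)
  moreover have "card (f1 ` B) \<noteq> card B" using B(3) fin0[OF B(1)] by (simp add: inj_on_iff_eq_card)
  ultimately show ?thesis using B by (subst nu_eq) simp
qed

lemma nu_bad0: "B \<subseteq> E0 \<Longrightarrow> 0 \<in> f1 ` B \<Longrightarrow> \<nu> B = \<infinity>"
proof -
  assume B: "B \<subseteq> E0" "0 \<in> f1 ` B"
  have "(INF C\<in>CC. pm (f1 ` B \<union> C)) = (INF C\<in>CC. \<infinity>)"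
    using B(2) by (intro INF_cong) (auto simp: pm_0)
  then show ?thesis by (subst nu_eq) (simp add: INF_top)
qed

lemma nu_val: "B \<subseteq> E0 \<Longrightarrow> card B = \<rho> \<Longrightarrow> inj_on f1 B \<Longrightarrow> 0 \<notin> f1 ` B \<Longrightarrow>
    \<nu> B = (INF C\<in>CC. pm (f1 ` B \<union> C))"
proof -
  assume B: "B \<subseteq> E0" "card B = \<rho>" "inj_on f1 B" "0 \<notin> f1 ` B"
  have c: "card (f1 ` B) = \<rho>" using B by (simp add: card_image)
  have "(\<Sum>i\<in>B. f2 i) = (\<Sum>i\<in>B. 0)"
  proof (intro sum.cong refl)
    fix i assume i: "i \<in> B"
    have iE: "i \<in> E0" using subsetD[OF B(1) i] .
    have "f1 i \<noteq> 0" using B(4) i by (metis image_eqI)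
    then show "f2 i = 0" using f2z iE by blast
  qed
  then show ?thesis using c by (subst nu_eq) simp
qed

lemma nu_good: "B \<subseteq> E0 \<Longrightarrow> card B = \<rho> \<Longrightarrow> \<nu> B \<noteq> \<infinity> \<Longrightarrow>
    inj_on f1 B \<and> 0 \<notin> f1 ` B \<and> \<nu> B = (INF C\<in>CC. pm (f1 ` B \<union> C))"
proof -
  assume B: "B \<subseteq> E0" "card B = \<rho>" "\<nu> B \<noteq> \<infinity>"
  have i: "inj_on f1 B" using nu_bad[OF B(1,2)] B(3) by metis
  have z: "0 \<notin> f1 ` B" using nu_bad0[OF B(1)] B(3) by metis
  show ?thesis using i z nu_val[OF B(1,2) i z] by simp
qed

lemma nu_nmi: "B \<subseteq> E0 \<Longrightarrow> card B = \<rho> \<Longrightarrow> \<nu> B \<noteq> -\<infinity>"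
proof (cases "\<nu> B = \<infinity>")
  case False
  assume B: "B \<subseteq> E0" "card B = \<rho>"
  have g: "inj_on f1 B" "0 \<notin> f1 ` B" "\<nu> B = (INF C\<in>CC. pm (f1 ` B \<union> C))"
    using nu_good[OF B False] by auto
  have "\<forall>C\<in>CC. pm (f1 ` B \<union> C) \<noteq> -\<infinity>"
  proof
    fix C assume C: "C \<in> CC"
    have "card (f1 ` B \<union> C) = r" using card_AC[OF fS[OF B(1)] C] g(1) B rho_le
      by (simp add: card_image)
    moreover have "f1 ` B \<union> C \<subseteq> E0" using fS[OF B(1)] S_E0 CC_props[OF C] by blast
    ultimately show "pm (f1 ` B \<union> C) \<noteq> -\<infinity>" using pm_nmi by blast
  qed
  then show ?thesis using g(3) INF_nmi[OF CC_fin CC_ne] by simp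
qed simp

lemma E1E0: "E1 \<subseteq> E0" by auto

lemma exB_nu: "\<exists>B. B \<subseteq> E0 \<and> card B = \<rho> \<and> \<nu> B \<noteq> \<infinity>"
proof -
  obtain Bm where Bm: "Bm \<subseteq> E1" "card Bm = r" "\<mu> Bm \<noteq> \<infinity>" "card (Bm \<inter> S) = \<rho>"
    using exBm by blast
  define A where "A = Bm \<inter> S"
  define g where "g = inv_into E0 f1"
  have AS: "A \<subseteq> S" unfolding A_def by (rule Int_lower2)
  have ABm: "A \<subseteq> Bm" unfolding A_def by (rule Int_lower1)
  have "0 \<notin> E1" by simp
  then have Bm0: "0 \<notin> Bm" using Bm(1) by (meson subsetD)
  then have A0: "0 \<notin> A" using ABm by (meson subsetD)
  have BmE0: "Bm \<subseteq> E0" using Bm(1) E1E0 by (rule subset_trans)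
  have fBm: "finite Bm" using fin0[OF BmE0] .
  define B where "B = g ` A"
  have BE0: "B \<subseteq> E0" unfolding B_def g_def
  proof (rule image_subsetI)
    fix x assume xA: "x \<in> A"
    have "x \<in> f1 ` E0" using subsetD[OF AS xA] .
    then show "inv_into E0 f1 x \<in> E0" by (rule inv_into_into)
  qed
  have injg: "inj_on g A" unfolding g_def using AS by (rule inj_on_inv_into)
  have cB: "card B = \<rho>" unfolding B_def using card_image[OF injg] Bm(4) A_def by simp
  have fB: "f1 ` B = A" unfolding B_def g_def by (rule image_inv_into_cancel[OF refl AS])
  have injB: "inj_on f1 B" using fB cB fin0[OF BE0] Bm(4) A_def by (simp add: inj_on_iff_eq_card)
  have B0: "0 \<notin> f1 ` B" using fB A0 by simp
  have nuB: "\<nu> B = (INF C\<in>CC. pm (A \<union> C))" using nu_val[OF BE0 cB injB B0] fB by simp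
  have "card (Bm - S) = card Bm - card (Bm \<inter> S)"
    using fBm by (intro card_Diff_subset_Int finite_Int disjI1)
  then have c: "card (Bm - S) = r - \<rho>" using Bm(2,4) by simp
  have "Bm - S \<subseteq> E0 - S" using BmE0 by (rule Diff_mono) (rule order_refl)
  then have CBm: "Bm - S \<in> CC" using c by (simp only: mem_Collect_eq)
  have "A \<union> (Bm - S) = Bm" unfolding A_def by (rule Int_Diff_Un)
  moreover have "\<nu> B \<le> pm (A \<union> (Bm - S))" unfolding nuB by (rule INF_lower[OF CBm])
  ultimately have "\<nu> B \<le> pm Bm" by simp
  also have "pm Bm = \<mu> Bm" using Bm0 by (rule pm_E1)
  finally have le: "\<nu> B \<le> \<mu> Bm" .
  have "\<nu> B \<noteq> \<infinity>"
  proof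
    assume "\<nu> B = \<infinity>"
    then have "\<mu> Bm = \<infinity>" using le by simp
    then show False using Bm(3) by simp
  qed
  then show ?thesis using BE0 cB by blast
qed

lemma coc_nu:
  assumes J: "J \<subseteq> E0" "e \<in> E0" "e \<notin> J" "card J + 1 = \<rho>" "\<nu> (insert e J) \<noteq> \<infinity>" and i: "i \<in> E0"
  shows "(INF C\<in>CC. cocirc E1 pm (f1 ` J \<union> C) (f1 i)) = \<nu> (insert i J)"
proof -
  have ieJ: "insert e J \<subseteq> E0" using J by simp
  have fJ: "finite J" using fin0[OF J(1)] .
  have ceJ: "card (insert e J) = \<rho>" using J fJ by simp
  have g: "inj_on f1 (insert e J)" "0 \<notin> f1 ` insert e J" using nu_good[OF ieJ ceJ J(5)] by auto
  then have injJ: "inj_on f1 J" and J0: "0 \<notin> f1 ` J" by (auto intro: inj_on_subset)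
  show ?thesis
  proof (cases "i \<in> J")
    case True
    have "(INF C\<in>CC. cocirc E1 pm (f1 ` J \<union> C) (f1 i)) = (INF C\<in>CC. \<infinity>)"
      using True by (intro INF_cong) (auto simp: cocirc_def)
    moreover have "\<nu> (insert i J) = \<infinity>" using True J nu_small[OF J(1)] by (simp add: insert_absorb)
    ultimately show ?thesis by (simp add: INF_top)
  next
    case False
    have iiJ: "insert i J \<subseteq> E0" using J i by simp
    have ciJ: "card (insert i J) = \<rho>" using J fJ False by simp
    show ?thesis
    proof (cases "f1 i = 0")
      case True
      have "(INF C\<in>CC. cocirc E1 pm (f1 ` J \<union> C) (f1 i)) = (INF C\<in>CC. \<infinity>)"
        using True by (intro INF_cong) (auto simp: cocirc_def)
      moreover have "\<nu> (insert i J) = \<infinity>" using nu_bad0[OF iiJ] True by simp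
      ultimately show ?thesis by (simp add: INF_top)
    next
      case False2: False
      show ?thesis
      proof (cases "f1 i \<in> f1 ` J")
        case True
        have "(INF C\<in>CC. cocirc E1 pm (f1 ` J \<union> C) (f1 i)) = (INF C\<in>CC. \<infinity>)"
          using True by (intro INF_cong) (auto simp: cocirc_def)
        moreover have "\<not> inj_on f1 (insert i J)" using True False by (auto simp: inj_on_def)
        then have "\<nu> (insert i J) = \<infinity>" using nu_bad[OF iiJ ciJ] by simp
        ultimately show ?thesis by (simp add: INF_top)
      next
        case False3: False
        have fiE1: "f1 i \<in> E1" using f1r i False2 by (auto simp: Suc_le_eq)
        have fiS: "f1 i \<in> S" using i by simp
        have injiJ: "inj_on f1 (insert i J)" using injJ False3 False by simp
        have iJ0: "0 \<notin> f1 ` insert i J" using J0 False2 by simp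
        have "(INF C\<in>CC. cocirc E1 pm (f1 ` J \<union> C) (f1 i)) = (INF C\<in>CC. pm (f1 ` insert i J \<union> C))"
        proof (intro INF_cong refl)
          fix C assume C: "C \<in> CC"
          have "f1 i \<notin> C" using CC_props4[OF C] fiS by blast
          then show "cocirc E1 pm (f1 ` J \<union> C) (f1 i) = pm (f1 ` insert i J \<union> C)"
            unfolding cocirc_def using fiE1 False3 by simp
        qed
        also have "\<dots> = \<nu> (insert i J)" using nu_val[OF iiJ ciJ injiJ iJ0] by simp
        finally show ?thesis .
      qed
    qed
  qed
qed

lemma ereal_sum_nmi: "(a::ereal) \<noteq> -\<infinity> \<Longrightarrow> b \<noteq> -\<infinity> \<Longrightarrow> a + b \<noteq> -\<infinity>"
  by (cases a; cases b) auto

lemma dir1: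
  assumes x: "x \<in> trop_bar E0 \<rho> \<nu>"
  shows "\<exists>z. tcond E1 r \<mu> z \<and> (\<forall>a. a \<notin> E1 \<longrightarrow> z a = \<infinity>) \<and> (\<forall>a\<in>E1. z a \<noteq> -\<infinity>)
            \<and> (\<forall>i\<in>E0. z (f1 i) = x i)"
proof -
  have tv: "tvec E0 x" and tc: "tcond E0 \<rho> \<nu> x" using x unfolding trop_bar_iff by auto
  have xm: "\<forall>e\<in>E0. x e \<noteq> -\<infinity>" using tv unfolding tvec_def by blast
  define K where "K = {e\<in>E0. x e \<noteq> \<infinity>}"
  have finK: "finite K" unfolding K_def by simp
  have neK: "K \<noteq> {}" using tv unfolding tvec_def K_def by blast
  define P where "P = (\<lambda>e J. J \<subseteq> E0 \<and> e \<notin> J \<and> card J + 1 = \<rho> \<and> \<nu> (insert e J) \<noteq> \<infinity> \<and>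
            (\<forall>f\<in>E0 - J. x f + \<nu> (insert e J) \<le> \<nu> (insert f J) + x e))"
  have exP: "\<exists>J. P e J" if "e \<in> K" for e
  proof -
    have "e \<in> E0" "x e \<noteq> \<infinity>" using that unfolding K_def by auto
    then show ?thesis unfolding P_def
      using span[of E0 \<rho> \<nu> x e] exB_nu tc xm nu_nmi by simp
  qed
  define Jf where "Jf = (\<lambda>e. SOME J. P e J)"
  have PJ: "P e (Jf e)" if "e \<in> K" for e
    unfolding Jf_def using exP[OF that] by (rule someI_ex)
  have eE0: "e \<in> E0" if "e \<in> K" for e using that unfolding K_def by simp
  have JE0: "Jf e \<subseteq> E0" "e \<notin> Jf e" "card (Jf e) + 1 = \<rho>" "\<nu> (insert e (Jf e)) \<noteq> \<infinity>"
    if "e \<in> K" for e using PJ[OF that] unfolding P_def by auto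
  have Jineq: "x f + \<nu> (insert e (Jf e)) \<le> \<nu> (insert f (Jf e)) + x e"
    if "e \<in> K" "f \<in> E0 - Jf e" for e f using PJ[OF that(1)] that(2) unfolding P_def by auto
  obtain e1 where e1: "e1 \<in> K" using neK by blast
  have rho1: "\<rho> \<ge> 1" using JE0(3)[OF e1] by simp
  have r1: "r \<ge> 1" using rho1 rho_le by simp
  have Jgood: "inj_on f1 (Jf e) \<and> 0 \<notin> f1 ` Jf e \<and> card (f1 ` Jf e) + 1 = \<rho>" if "e \<in> K" for e
  proof -
    have a: "insert e (Jf e) \<subseteq> E0" using JE0[OF that] eE0[OF that] by simp
    have fJ: "finite (Jf e)" using fin0 JE0(1)[OF that] by blast
    have b: "card (insert e (Jf e)) = \<rho>" using JE0[OF that] fJ by simp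
    have g: "inj_on f1 (insert e (Jf e))" "0 \<notin> f1 ` insert e (Jf e)"
      using nu_good[OF a b JE0(4)[OF that]] by auto
    then have "inj_on f1 (Jf e)" "0 \<notin> f1 ` Jf e" by (auto intro: inj_on_subset)
    then show ?thesis using JE0(3)[OF that] by (simp add: card_image)
  qed
  have Jp_card: "card (f1 ` Jf e \<union> C) + 1 = r" if "e \<in> K" "C \<in> CC" for e C
  proof -
    have "f1 ` Jf e \<subseteq> S" using fS JE0(1)[OF that(1)] by blast
    then have "card (f1 ` Jf e \<union> C) = card (f1 ` Jf e) + (r - \<rho>)" using that(2) by (rule card_AC)
    moreover have "card (f1 ` Jf e) + 1 = \<rho>" using Jgood[OF that(1)] by blast
    ultimately show ?thesis using rho_le rho1 by arith
  qed
  have Jp_E0: "f1 ` Jf e \<union> C \<subseteq> E0" if "e \<in> K" "C \<in> CC" for e C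
  proof -
    have "f1 ` Jf e \<subseteq> S" using fS JE0(1)[OF that(1)] by blast
    then have "f1 ` Jf e \<subseteq> E0" using S_E0 by (rule subset_trans)
    then show ?thesis using CC_props3[OF that(2)] by (rule Un_least)
  qed
  define lam where "lam = (\<lambda>e. ereal (real_of_ereal (x e) - real_of_ereal (\<nu> (insert e (Jf e)))))"
  define h where "h = (\<lambda>e a. INF C\<in>CC. cocirc E1 pm (f1 ` Jf e \<union> C) a)"
  define z where "z = (\<lambda>a. INF e\<in>K. lam e + h e a)"
  have tcg: "tcond E1 r \<mu> (cocirc E1 pm (f1 ` Jf e \<union> C))" if "e \<in> K" "C \<in> CC" for e C
  proof (cases "0 \<in> C")
    case True
    have "\<forall>a. cocirc E1 pm (f1 ` Jf e \<union> C) a = \<infinity>"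
      using True unfolding cocirc_def by (simp add: pm_0)
    then show ?thesis using r1 by (rule tcond_top)
  next
    case False
    have "0 \<notin> f1 ` Jf e \<union> C" using Jgood[OF that(1)] False by simp
    then have sub: "f1 ` Jf e \<union> C \<subseteq> E1" using Jp_E0[OF that] sub_E1 by blast
    have eq: "cocirc E1 pm (f1 ` Jf e \<union> C) = cocirc E1 \<mu> (f1 ` Jf e \<union> C)"
    proof
      fix a
      show "cocirc E1 pm (f1 ` Jf e \<union> C) a = cocirc E1 \<mu> (f1 ` Jf e \<union> C) a"
        unfolding cocirc_def using \<open>0 \<notin> f1 ` Jf e \<union> C\<close> by (simp add: pm_E1)
    qed
    show ?thesis unfolding eq using vm sub Jp_card[OF that] by (rule coc_tcond)
  qed
  have tch: "tcond E1 r \<mu> (h e)" if "e \<in> K" for e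
    unfolding h_def using tcg[OF that] by (intro tcond_INF CC_fin CC_ne) auto
  have tcz: "tcond E1 r \<mu> z"
    unfolding z_def using tch by (intro tcond_INF finK neK) (auto intro: tcond_shift)
  have hf: "h e (f1 i) = \<nu> (insert i (Jf e))" if "e \<in> K" "i \<in> E0" for e i
    unfolding h_def using coc_nu[OF JE0(1)[OF that(1)] eE0[OF that(1)] JE0(2-4)[OF that(1)] that(2)] .
  have lamf: "lam e + \<nu> (insert e (Jf e)) = x e" if eK: "e \<in> K" for e
  proof -
    obtain a where a: "x e = ereal a" using eK xm unfolding K_def by (cases "x e") auto
    have "\<nu> (insert e (Jf e)) \<noteq> -\<infinity>"
      using nu_nmi[of "insert e (Jf e)"] JE0[OF eK] eE0[OF eK] fin0[of "Jf e"] by simp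
    then obtain b where b: "\<nu> (insert e (Jf e)) = ereal b" using JE0(4)[OF eK] by (cases "\<nu> (insert e (Jf e))") auto
    show ?thesis unfolding lam_def a b by simp
  qed
  have low: "x i \<le> lam e + \<nu> (insert i (Jf e))" if eK: "e \<in> K" and iE: "i \<in> E0" for e i
  proof (cases "i \<in> Jf e")
    case True
    then have "insert i (Jf e) = Jf e" by (simp add: insert_absorb)
    moreover have "\<nu> (Jf e) = \<infinity>" using nu_small[OF JE0(1)[OF eK]] JE0(3)[OF eK] by simp
    ultimately show ?thesis by simp
  next
    case False
    have ineq: "x i + \<nu> (insert e (Jf e)) \<le> \<nu> (insert i (Jf e)) + x e"
      using Jineq[OF eK] iE False by simp
    obtain a where a: "x e = ereal a" using eK xm unfolding K_def by (cases "x e") auto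
    have "\<nu> (insert e (Jf e)) \<noteq> -\<infinity>"
      using nu_nmi[of "insert e (Jf e)"] JE0[OF eK] eE0[OF eK] fin0[of "Jf e"] by simp
    then obtain b where b: "\<nu> (insert e (Jf e)) = ereal b" using JE0(4)[OF eK] by (cases "\<nu> (insert e (Jf e))") auto
    have "x i \<noteq> -\<infinity>" using xm iE by blast
    moreover have "\<nu> (insert i (Jf e)) \<noteq> -\<infinity>"
      using nu_nmi[of "insert i (Jf e)"] JE0[OF eK] iE False fin0[of "Jf e"] by simp
    ultimately show ?thesis using ineq unfolding lam_def a b
      by (cases "x i"; cases "\<nu> (insert i (Jf e))") auto
  qed
  have zf: "z (f1 i) = x i" if "i \<in> E0" for i
  proof -
    have "z (f1 i) = (INF e\<in>K. lam e + \<nu> (insert i (Jf e)))"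
      unfolding z_def using hf that by (intro INF_cong) auto
    also have "\<dots> = x i"
    proof (rule antisym)
      show "x i \<le> (INF e\<in>K. lam e + \<nu> (insert i (Jf e)))"
        using low that by (intro INF_greatest) auto
      show "(INF e\<in>K. lam e + \<nu> (insert i (Jf e))) \<le> x i"
      proof (cases "i \<in> K")
        case True
        have "(INF e\<in>K. lam e + \<nu> (insert i (Jf e))) \<le> lam i + \<nu> (insert i (Jf i))"
          using True by (rule INF_lower)
        then show ?thesis using lamf[OF True] by simp
      next
        case False
        then have "x i = \<infinity>" using that unfolding K_def by simp
        then show ?thesis by simp
      qed
    qed
    finally show ?thesis .
  qed
  have zinf: "z a = \<infinity>" if "a \<notin> E1" for a
  proof -
    have "h e a = (INF C\<in>CC. \<infinity>)" for e unfolding h_def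
    proof (intro INF_cong refl)
      fix C
      have "\<not> (a \<in> E1 \<and> a \<notin> f1 ` Jf e \<union> C)" using that by blast
      then show "cocirc E1 pm (f1 ` Jf e \<union> C) a = \<infinity>" unfolding cocirc_def by (rule if_not_P)
    qed
    then have "h e a = \<infinity>" for e by (simp add: INF_top)
    then show ?thesis unfolding z_def by (simp add: INF_top)
  qed
  have znmi: "z a \<noteq> -\<infinity>" for a
  proof -
    have "lam e + h e a \<noteq> -\<infinity>" if e: "e \<in> K" for e
    proof -
      have "cocirc E1 pm (f1 ` Jf e \<union> C) a \<noteq> -\<infinity>" if C: "C \<in> CC" for C
      proof (cases "a \<in> E1 \<and> a \<notin> f1 ` Jf e \<union> C")
        case True
        have fin: "finite (f1 ` Jf e \<union> C)" using fin0[OF Jp_E0[OF e C]] .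
        have "card (insert a (f1 ` Jf e \<union> C)) = r" using True fin Jp_card[OF e C] by simp
        moreover have "insert a (f1 ` Jf e \<union> C) \<subseteq> E0" using True Jp_E0[OF e C] E1E0 by blast
        ultimately have "pm (insert a (f1 ` Jf e \<union> C)) \<noteq> -\<infinity>" using pm_nmi by blast
        moreover have "cocirc E1 pm (f1 ` Jf e \<union> C) a = pm (insert a (f1 ` Jf e \<union> C))"
          unfolding cocirc_def using True by (rule if_P)
        ultimately show ?thesis by simp
      next
        case False
        have "cocirc E1 pm (f1 ` Jf e \<union> C) a = \<infinity>"
          unfolding cocirc_def using False by (rule if_not_P)
        then show ?thesis by simp
      qed
      then have "h e a \<noteq> -\<infinity>" unfolding h_def by (intro INF_nmi CC_fin CC_ne) auto
      then show ?thesis unfolding lam_def by (intro ereal_sum_nmi) auto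
    qed
    then show ?thesis unfolding z_def by (intro INF_nmi finK neK) auto
  qed
  show ?thesis using tcz zinf znmi zf by blast
qed

lemma dir2:
  assumes z: "z \<in> trop_bar E1 r \<mu>" and n1: "n \<ge> 1"
  shows "tcond E0 \<rho> \<nu> (\<lambda>i. if i \<in> E0 then z (f1 i) else \<infinity>)"
  unfolding tcond_def
proof (intro allI impI)
  fix I assume I: "I \<subseteq> E0 \<and> card I = \<rho> + 1 \<and> (\<exists>e\<in>E0. circ_vec \<nu> I e \<noteq> \<infinity>)"
  define x where "x = (\<lambda>i. if i \<in> E0 then z (f1 i) else \<infinity>)"
  define y where "y = (\<lambda>e. circ_vec \<nu> I e + x e)"
  have tvz: "tvec E1 z" and tcz: "tcond E1 r \<mu> z" using z unfolding trop_bar_iff by auto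
  have z0: "z 0 = \<infinity>" using tvz unfolding tvec_def by simp
  have zm: "z a \<noteq> -\<infinity>" for a
    using tvz unfolding tvec_def by (cases "a \<in> E1") auto
  have xf: "x i = z (f1 i)" if "i \<in> E0" for i using that unfolding x_def by simp
  have IE0: "I \<subseteq> E0" and cI: "card I = \<rho> + 1" using I by auto
  have fI: "finite I" using fin0[OF IE0] .
  have "E0 \<noteq> {}" by simp
  then obtain e0 where e0: "e0 \<in> E0" "\<forall>e\<in>E0. y e0 \<le> y e"
    using min_attained[of E0 y] by auto
  have "min_twice E0 y"
  proof (cases "y e0 = \<infinity>")
    case True
    then have "\<forall>e\<in>E0. y e = \<infinity>" using e0 by (metis ereal_infty_less_eq(1))
    moreover have "0 \<in> E0" "1 \<in> E0" "(0::nat) \<noteq> 1" using n1 by auto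
    ultimately show ?thesis unfolding mt_alt by (intro bexI[of _ 0] bexI[of _ 1]) auto
  next
    case False
    note yne = False
    show ?thesis
    proof (rule ccontr)
      assume nmt: "\<not> min_twice E0 y"
      have strict: "y e0 < y e" if "e \<in> E0 - {e0}" for e
      proof (rule ccontr)
        assume "\<not> y e0 < y e"
        then have "y e = y e0" using e0 that by (meson DiffD1 antisym not_le)
        then have "min_twice E0 y" unfolding mt_alt using e0 that
          by (intro bexI[of _ e0] bexI[of _ e]) auto
        then show False using nmt by simp
      qed
      have e0I: "e0 \<in> I"
      proof (rule ccontr)
        assume "e0 \<notin> I"
        then have "y e0 = \<infinity>" unfolding y_def circ_vec_def by simp
        then show False using False by simp
      qed
      define B where "B = I - {e0}"
      have ye0: "y e0 = \<nu> B + z (f1 e0)" unfolding y_def circ_vec_def B_def using e0I xf e0(1) by simp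
      have nB: "\<nu> B \<noteq> \<infinity>" and zs0: "z (f1 e0) \<noteq> \<infinity>" using False ye0 by auto
      have BE0: "B \<subseteq> E0" unfolding B_def using IE0 by auto
      have cB: "card B = \<rho>" unfolding B_def using cI fI e0I by simp
      have fB: "finite B" using fin0[OF BE0] .
      have injB: "inj_on f1 B" and B0: "0 \<notin> f1 ` B" and nuB: "\<nu> B = (INF C\<in>CC. pm (f1 ` B \<union> C))"
        using nu_good[OF BE0 cB nB] by auto
      obtain C0 where C0: "C0 \<in> CC" "\<nu> B = pm (f1 ` B \<union> C0)"
        using INF_attained[OF CC_fin CC_ne, of "\<lambda>C. pm (f1 ` B \<union> C)"] nuB by auto
      define s0 where "s0 = f1 e0"
      have s00: "s0 \<noteq> 0"
      proof
        assume "s0 = 0"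
        then have "z (f1 e0) = \<infinity>" using z0 unfolding s0_def by simp
        then show False using zs0 by simp
      qed
      have s0E1: "s0 \<in> E1" using f1r e0(1) s00 unfolding s0_def by (auto simp: Suc_le_eq)
      have s0S: "s0 \<in> S" unfolding s0_def using e0(1) by (rule imageI)
      show False
      proof (cases "s0 \<in> f1 ` B")
        case True
        then obtain e1 where e1: "e1 \<in> B" "f1 e1 = s0" by blast
        have e1e0: "e1 \<noteq> e0" using e1 unfolding B_def by simp
        have e1I: "e1 \<in> I" using e1 unfolding B_def by simp
        have e1E0: "e1 \<in> E0" using subsetD[OF IE0 e1I] .
        define I1 where "I1 = I - {e1}"
        have I1E0: "I1 \<subseteq> E0" unfolding I1_def using IE0 by auto
        have cI1: "card I1 = \<rho>" unfolding I1_def using cI fI e1I by simp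
        have I1eq: "I1 = insert e0 (B - {e1})" unfolding I1_def B_def using e0I e1e0 e1I by auto
        have "f1 ` I1 = insert s0 (f1 ` (B - {e1}))" unfolding I1eq s0_def by simp
        also have "\<dots> = f1 ` B" using e1 by auto
        finally have fI1: "f1 ` I1 = f1 ` B" .
        have injI1: "inj_on f1 I1" using fI1 cI1 cB injB fB fin0[OF I1E0]
          by (simp add: inj_on_iff_eq_card)
        have "\<nu> I1 = \<nu> B" using nu_val[OF I1E0 cI1 injI1] fI1 B0 nuB by simp
        moreover have "y e1 = \<nu> I1 + x e1" unfolding y_def circ_vec_def I1_def using e1I by simp
        ultimately have "y e1 = y e0" using xf[OF e1E0] e1(2) ye0 unfolding s0_def by simp
        moreover have "y e0 < y e1" using strict e1E0 e1e0 by simp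
        ultimately show False by simp
      next
        case False
        define A where "A = f1 ` B"
        have AS: "A \<subseteq> S" unfolding A_def using fS[OF BE0] .
        have AE0: "A \<subseteq> E0" using AS S_E0 by (rule subset_trans)
        have A0: "0 \<notin> A" using B0 unfolding A_def .
        have AE1: "A \<subseteq> E1" using sub_E1[OF AE0 A0] .
        have cA: "card A = \<rho>" unfolding A_def using injB cB by (simp add: card_image)
        have fA: "finite A" using fin0[OF AE0] .
        have s0A: "s0 \<notin> A" using False unfolding A_def .
        have C00: "0 \<notin> C0"
        proof
          assume "0 \<in> C0"
          then have "pm (f1 ` B \<union> C0) = \<infinity>" by (intro pm_0) simp
          then show False using C0(2) nB by simp
        qed
        have C0E1: "C0 \<subseteq> E1" using sub_E1[OF CC_props3[OF C0(1)] C00] .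
        have C0S: "C0 \<inter> S = {}" using CC_props4[OF C0(1)] .
        have s0C0: "s0 \<notin> C0" using C0S s0S by blast
        define J where "J = insert s0 (A \<union> C0)"
        have JE1: "J \<subseteq> E1" unfolding J_def using s0E1 AE1 C0E1 by blast
        have J0: "0 \<notin> J" using JE1 by auto
        have cAC: "card (A \<union> C0) = r" using card_AC[OF AS C0(1)] cA rho_le by simp
        have fAC: "finite (A \<union> C0)" using fA CC_props5[OF C0(1)] by simp
        have cJ: "card J = r + 1" unfolding J_def using cAC fAC s0A s0C0 by simp
        have fJ: "finite J" unfolding J_def using fAC by simp
        have Js0: "J - {s0} = A \<union> C0" unfolding J_def using s0A s0C0 by auto
        have A0C0: "0 \<notin> A \<union> C0" using A0 C00 by simp
        have cs0: "circ_vec \<mu> J s0 = \<nu> B"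
          unfolding circ_vec_def J_def using Js0 C0(2) pm_E1[OF A0C0] unfolding J_def A_def by simp
        have yfin: "y e0 < \<infinity>" using yne by (simp add: less_top[symmetric])
        have "min_twice E1 (\<lambda>a. circ_vec \<mu> J a + z a)"
          using tcondD[OF tcz JE1 cJ s0E1] cs0 nB by simp
        moreover have "\<not> min_twice E1 (\<lambda>a. circ_vec \<mu> J a + z a)"
        proof (rule not_min_twice[OF s0E1], intro ballI)
          fix a assume a: "a \<in> E1 - {s0}"
          have base: "circ_vec \<mu> J s0 + z s0 = y e0" using cs0 ye0 unfolding s0_def by simp
          show "circ_vec \<mu> J s0 + z s0 < circ_vec \<mu> J a + z a"
            unfolding base
          proof (cases "a \<in> J")
            case False
            then have eq: "circ_vec \<mu> J a + z a = \<infinity>" unfolding circ_vec_def by simp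
            show "y e0 < circ_vec \<mu> J a + z a" unfolding eq by (rule yfin)
          next
            case True
            then have aAC: "a \<in> A \<union> C0" using a unfolding J_def by simp
            show "y e0 < circ_vec \<mu> J a + z a"
            proof (cases "a \<in> C0")
              case True
              have "\<mu> (J - {a}) = \<infinity>"
              proof (rule ccontr)
                assume nf: "\<mu> (J - {a}) \<noteq> \<infinity>"
                have JaE0: "J - {a} \<subseteq> E0" using JE1 E1E0 by auto
                have cJa: "card (J - {a}) = r" using cJ fJ \<open>a \<in> J\<close> by simp
                have "0 \<notin> J - {a}" using J0 by simp
                then have "pm (J - {a}) \<noteq> \<infinity>" using nf by (simp add: pm_E1)
                then have le: "card ((J - {a}) \<inter> S) \<le> \<rho>" using rho_ge JaE0 cJa by blast
                have aS: "a \<notin> S" using C0S True by blast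
                have sub: "insert s0 A \<subseteq> (J - {a}) \<inter> S"
                proof
                  fix u assume u: "u \<in> insert s0 A"
                  then have "u \<in> S" using s0S AS by blast
                  moreover have "u \<in> J" using u unfolding J_def by blast
                  moreover have "u \<noteq> a" using aS \<open>u \<in> S\<close> by blast
                  ultimately show "u \<in> (J - {a}) \<inter> S" by blast
                qed
                have "card (insert s0 A) \<le> card ((J - {a}) \<inter> S)"
                  using sub fJ by (intro card_mono) auto
                then show False using le cA fA s0A by simp
              qed
              then have eq: "circ_vec \<mu> J a + z a = \<infinity>" unfolding circ_vec_def using \<open>a \<in> J\<close> by simp
              show ?thesis unfolding eq by (rule yfin)
            next
              case False
              then have aA: "a \<in> A" using aAC by simp
              then obtain e where e: "e \<in> B" "f1 e = a" unfolding A_def by blast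
              have ee0: "e \<noteq> e0" using e unfolding B_def by simp
              have eI: "e \<in> I" using e unfolding B_def by simp
              have eE0: "e \<in> E0" using subsetD[OF IE0 eI] .
              define Ie where "Ie = I - {e}"
              have IeE0: "Ie \<subseteq> E0" unfolding Ie_def using IE0 by auto
              have cIe: "card Ie = \<rho>" unfolding Ie_def using cI fI eI by simp
              have Ieeq: "Ie = insert e0 (B - {e})" unfolding Ie_def B_def using e0I ee0 eI by auto
              have fBe: "f1 ` (B - {e}) = A - {a}"
                unfolding A_def using injB e by (simp add: inj_on_image_set_diff)
              have fIe: "f1 ` Ie = insert s0 (A - {a})" unfolding Ieeq fBe[symmetric] s0_def by simp
              have dd: "B - {e} - {e0} = B - {e}" unfolding B_def by auto
              have injIe: "inj_on f1 Ie" unfolding Ieeq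
                using inj_on_subset[OF injB, of "B - {e}"] s0A fBe dd unfolding s0_def
                by (simp add: inj_on_insert)
              have Ie0: "0 \<notin> f1 ` Ie" unfolding fIe using s00 A0 by simp
              have Ja: "J - {a} = f1 ` Ie \<union> C0" unfolding fIe J_def using False s0A aA by auto
              have "\<nu> Ie \<le> pm (f1 ` Ie \<union> C0)"
                unfolding nu_val[OF IeE0 cIe injIe Ie0] by (rule INF_lower[OF C0(1)])
              also have "\<dots> = \<mu> (J - {a})" unfolding Ja[symmetric] using J0 by (simp add: pm_E1)
              finally have le: "\<nu> Ie \<le> \<mu> (J - {a})" .
              have "y e = \<nu> Ie + z a" unfolding y_def circ_vec_def Ie_def using eI xf[OF eE0] e(2) by simp
              also have "\<dots> \<le> circ_vec \<mu> J a + z a"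
                unfolding circ_vec_def using \<open>a \<in> J\<close> le by (simp add: add_right_mono)
              finally have "y e \<le> circ_vec \<mu> J a + z a" .
              moreover have "y e0 < y e" using strict eE0 ee0 by simp
              ultimately show ?thesis by simp
            qed
          qed
        qed
        ultimately show False by simp
      qed
    qed
  qed
  then show "min_twice E0 (\<lambda>e. circ_vec \<nu> I e + (if e \<in> E0 then z (f1 e) else \<infinity>))"
    unfolding y_def x_def .
qed

lemma tm:
  fixes v :: "'k::field \<Rightarrow> ereal" and M :: "nat \<Rightarrow> nat \<Rightarrow> 'k"
  assumes val: "nonarch_val v" and am: "assoc_matrix v n f1 f2 M"
    and zm: "\<forall>a. z a \<noteq> -\<infinity>" and z0: "z 0 = \<infinity>" and i: "i \<in> E1"
  shows "tmult v n M z i = z (f1 i)"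
proof -
  have v0: "v 0 = \<infinity>" using val unfolding nonarch_val_def by blast
  have am1: "\<And>j. j \<in> E1 \<Longrightarrow> f1 i = j \<Longrightarrow> v (M i j) = f2 i"
    and am2: "\<And>j. j \<in> E1 \<Longrightarrow> f1 i \<noteq> j \<Longrightarrow> M i j = 0"
    using am i unfolding assoc_matrix_def by blast+
  have iE0: "i \<in> E0" using i by simp
  have t: "tmult v n M z i = (INF j\<in>E1. v (M i j) + z j)" unfolding tmult_def using i by simp
  have off: "v (M i j) + z j = \<infinity>" if "j \<in> E1" "j \<noteq> f1 i" for j
    using am2[OF that(1)] that(2) v0 by simp
  show ?thesis
  proof (cases "f1 i = 0")
    case True
    have "(INF j\<in>E1. v (M i j) + z j) = (INF j\<in>E1. \<infinity>)"
      using off True by (intro INF_cong) auto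
    then show ?thesis unfolding t using True z0 by (simp add: INF_top)
  next
    case False
    have fiE1: "f1 i \<in> E1" using f1r iE0 False by (auto simp: Suc_le_eq)
    have f2i: "f2 i = 0" using f2z iE0 False by blast
    have on: "v (M i (f1 i)) + z (f1 i) = z (f1 i)" using am1[OF fiE1 refl] f2i by simp
    have "(INF j\<in>E1. v (M i j) + z j) = z (f1 i)"
    proof (rule antisym)
      show "(INF j\<in>E1. v (M i j) + z j) \<le> z (f1 i)"
        using INF_lower[OF fiE1, of "\<lambda>j. v (M i j) + z j"] on by simp
      show "z (f1 i) \<le> (INF j\<in>E1. v (M i j) + z j)"
      proof (rule INF_greatest)
        fix j assume j: "j \<in> E1"
        show "z (f1 i) \<le> v (M i j) + z j"
        proof (cases "j = f1 i")
          case True then show ?thesis using on by simp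
        next
          case False then show ?thesis unfolding off[OF j False] by simp
        qed
      qed
    qed
    then show ?thesis unfolding t .
  qed
qed

lemma part1:
  fixes v :: "'k::field \<Rightarrow> ereal" and M :: "nat \<Rightarrow> nat \<Rightarrow> 'k"
  assumes val: "nonarch_val v" and am: "assoc_matrix v n f1 f2 M"
  shows "trop_induced n r \<mu> f1 f2 = tmult_set v n M (trop_bar E1 r \<mu>)"
proof (rule set_eqI, rule iffI)
  fix y assume "y \<in> trop_induced n r \<mu> f1 f2"
  then obtain x where ty: "tvec E1 y" and x: "x \<in> trop_bar E0 \<rho> \<nu>" and yx: "y = x(0 := \<infinity>)"
    unfolding trop_induced_def by blast
  have tvx: "tvec E0 x" using x unfolding trop_bar_iff by simp
  obtain z where tcz: "tcond E1 r \<mu> z" and zinf: "\<forall>a. a \<notin> E1 \<longrightarrow> z a = \<infinity>"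
    and znmi: "\<forall>a\<in>E1. z a \<noteq> -\<infinity>" and zf: "\<forall>i\<in>E0. z (f1 i) = x i"
    using dir1[OF x] by blast
  have z0: "z 0 = \<infinity>" using zinf by simp
  have zm: "\<forall>a. z a \<noteq> -\<infinity>" using zinf znmi by (metis MInfty_neq_PInfty(1))
  obtain i where i: "i \<in> E1" "y i \<noteq> \<infinity>" using ty unfolding tvec_def by blast
  have i0: "i \<noteq> 0" using i by simp
  have "z (f1 i) \<noteq> \<infinity>" using zf i i0 yx by simp
  then have "f1 i \<in> E1" using zinf by blast
  then have "tvec E1 z" unfolding tvec_def using znmi zinf \<open>z (f1 i) \<noteq> \<infinity>\<close> by blast
  then have zt: "z \<in> trop_bar E1 r \<mu>" using tcz unfolding trop_bar_iff by simp
  have "y = tmult v n M z"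
  proof
    fix j
    show "y j = tmult v n M z j"
    proof (cases "j \<in> E1")
      case True
      then have "j \<noteq> 0" by simp
      then show ?thesis using tm[OF val am zm z0 True] zf True yx by simp
    next
      case False
      have "y j = \<infinity>"
      proof (cases "j = 0")
        case True then show ?thesis using yx by simp
      next
        case False2: False
        then have "j \<notin> E0" using False by auto
        then show ?thesis using tvx yx False2 unfolding tvec_def by simp
      qed
      then show ?thesis unfolding tmult_def using False by (simp del: atLeastAtMost_iff)
    qed
  qed
  then show "y \<in> tmult_set v n M (trop_bar E1 r \<mu>)" unfolding tmult_set_def using ty zt by blast
next
  fix y assume "y \<in> tmult_set v n M (trop_bar E1 r \<mu>)"
  then obtain z where ty: "tvec E1 y" and zt: "z \<in> trop_bar E1 r \<mu>" and yz: "y = tmult v n M z"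
    unfolding tmult_set_def by blast
  have tvz: "tvec E1 z" using zt unfolding trop_bar_iff by simp
  have z0: "z 0 = \<infinity>" using tvz unfolding tvec_def by simp
  have zm: "\<forall>a. z a \<noteq> -\<infinity>"
  proof
    fix a show "z a \<noteq> -\<infinity>" using tvz unfolding tvec_def by (cases "a \<in> E1") auto
  qed
  obtain i where i: "i \<in> E1" "y i \<noteq> \<infinity>" using ty unfolding tvec_def by blast
  have n1: "n \<ge> 1" using i by simp
  define x where "x = (\<lambda>i. if i \<in> E0 then z (f1 i) else \<infinity>)"
  have tcx: "tcond E0 \<rho> \<nu> x" unfolding x_def using dir2[OF zt n1] .
  have yi: "y j = x j" if "j \<in> E1" for j
    using tm[OF val am zm z0 that] yz that unfolding x_def by simp
  have "tvec E0 x" unfolding tvec_def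
  proof (intro conjI)
    show "\<forall>e\<in>E0. x e \<noteq> -\<infinity>" unfolding x_def using zm by simp
    show "\<forall>e. e \<notin> E0 \<longrightarrow> x e = \<infinity>" unfolding x_def by simp
    show "\<exists>e\<in>E0. x e \<noteq> \<infinity>" using i yi by (intro bexI[of _ i]) auto
  qed
  then have xt: "x \<in> trop_bar E0 \<rho> \<nu>" using tcx unfolding trop_bar_iff by simp
  have "y = x(0 := \<infinity>)"
  proof
    fix j
    show "y j = (x(0 := \<infinity>)) j"
    proof (cases "j \<in> E1")
      case True then show ?thesis using yi by simp
    next
      case False
      then have "y j = \<infinity>" unfolding yz tmult_def by (simp del: atLeastAtMost_iff)
      moreover have "(x(0 := \<infinity>)) j = \<infinity>" using False unfolding x_def by auto
      ultimately show ?thesis by simp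
    qed
  qed
  then show "y \<in> trop_induced n r \<mu> f1 f2" unfolding trop_induced_def using ty xt by blast
qed

end



lemma v1: "nonarch_val v \<Longrightarrow> v 1 = 0"
proof -
  assume val: "nonarch_val v"
  have m: "v (1 * 1) = v 1 + v 1" using val unfolding nonarch_val_def by blast
  have "v 1 \<noteq> \<infinity>" "v 1 \<noteq> -\<infinity>" using val unfolding nonarch_val_def by auto
  then obtain a where a: "v 1 = ereal a" by (cases "v 1") auto
  then have "a = a + a" using m by simp
  then show ?thesis using a by (simp add: zero_ereal_def)
qed

lemma vnmi: "nonarch_val v \<Longrightarrow> v x \<noteq> -\<infinity>"
  unfolding nonarch_val_def by (cases "x = 0") auto

theorem lemma2p22:
  fixes v :: "'k::field \<Rightarrow> ereal" and n r :: nat and \<mu> :: "nat set \<Rightarrow> ereal"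
  assumes val: "nonarch_val v"
    and mu: "valuated_matroid {1..n} r \<mu>"
  shows "(\<forall>(f1 :: nat \<Rightarrow> nat) (f2 :: nat \<Rightarrow> ereal) (M :: nat \<Rightarrow> nat \<Rightarrow> 'k).
            (\<forall>i\<in>{0..n}. f1 i \<in> {0..n} \<and> f2 i \<noteq> -\<infinity>) \<and>
            (\<forall>i\<in>{0..n}. f1 i \<noteq> 0 \<longrightarrow> f2 i = 0) \<and>
            weakly_monomial n M \<and> assoc_matrix v n f1 f2 M \<longrightarrow>
            trop_induced n r \<mu> f1 f2 = tmult_set v n M (trop_bar {1..n} r \<mu>))
       \<and> (\<forall>M :: nat \<Rightarrow> nat \<Rightarrow> 'k.
            weakly_monomial n M \<and> (\<forall>i\<in>{1..n}. \<forall>j\<in>{1..n}. M i j \<in> {0, 1}) \<longrightarrow>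
            trop_induced n r \<mu> (assoc_f1 n M) (assoc_f2 v n M)
              = tmult_set v n M (trop_bar {1..n} r \<mu>))"
proof (intro conjI allI impI)
  fix f1 :: "nat \<Rightarrow> nat" and f2 :: "nat \<Rightarrow> ereal" and M :: "nat \<Rightarrow> nat \<Rightarrow> 'k"
  assume h: "(\<forall>i\<in>{0..n}. f1 i \<in> {0..n} \<and> f2 i \<noteq> -\<infinity>) \<and>
            (\<forall>i\<in>{0..n}. f1 i \<noteq> 0 \<longrightarrow> f2 i = 0) \<and>
            weakly_monomial n M \<and> assoc_matrix v n f1 f2 M"
  interpret indsetup n r \<mu> f1 f2
    using mu h by unfold_locales auto
  show "trop_induced n r \<mu> f1 f2 = tmult_set v n M (trop_bar {1..n} r \<mu>)"
    using part1[OF val] h by blast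
next
  fix M :: "nat \<Rightarrow> nat \<Rightarrow> 'k"
  assume h: "weakly_monomial n M \<and> (\<forall>i\<in>{1..n}. \<forall>j\<in>{1..n}. M i j \<in> {0, 1})"
  have wm: "\<And>i j j'. i \<in> {1..n} \<Longrightarrow> j \<in> {1..n} \<Longrightarrow> j' \<in> {1..n} \<Longrightarrow> M i j \<noteq> 0 \<Longrightarrow> M i j' \<noteq> 0 \<Longrightarrow> j = j'"
    using h unfolding weakly_monomial_def by blast
  have thej: "assoc_f1 n M i = j" if i: "i \<in> {1..n}" and j: "j \<in> {1..n}" and m: "M i j \<noteq> 0" for i j
  proof -
    have c: "i \<in> {1..n} \<and> (\<exists>j\<in>{1..n}. M i j \<noteq> 0)" using i j m by blast
    have "(THE j. j \<in> {1..n} \<and> M i j \<noteq> 0) = j"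
      using j m wm[OF i] by (intro the_equality) auto
    then show ?thesis unfolding assoc_f1_def using c by simp
  qed
  have nz: "i \<in> {1..n} \<and> assoc_f1 n M i \<in> {1..n} \<and> M i (assoc_f1 n M i) \<noteq> 0"
    if "assoc_f1 n M i \<noteq> 0" for i
  proof -
    have c: "i \<in> {1..n} \<and> (\<exists>j\<in>{1..n}. M i j \<noteq> 0)"
      using that unfolding assoc_f1_def by (cases "i \<in> {1..n} \<and> (\<exists>j\<in>{1..n}. M i j \<noteq> 0)") auto
    then obtain j where j: "j \<in> {1..n}" "M i j \<noteq> 0" by blast
    then show ?thesis using thej[of i j] c by simp
  qed
  have f2eq: "assoc_f2 v n M i = v (M i (assoc_f1 n M i))" if "assoc_f1 n M i \<noteq> 0" for i
  proof -
    have c: "i \<in> {1..n} \<and> (\<exists>j\<in>{1..n}. M i j \<noteq> 0)" using nz[OF that] by blast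
    then show ?thesis unfolding assoc_f2_def by simp
  qed
  have f2inf: "assoc_f2 v n M i = \<infinity>" if "assoc_f1 n M i = 0" for i
  proof (cases "i \<in> {1..n} \<and> (\<exists>j\<in>{1..n}. M i j \<noteq> 0)")
    case True
    then obtain j where j: "j \<in> {1..n}" "M i j \<noteq> 0" by blast
    then have "assoc_f1 n M i = j" using thej True by blast
    then show ?thesis using that j by simp
  next
    case False then show ?thesis unfolding assoc_f2_def by (rule if_not_P)
  qed
  have f1r: "\<forall>i\<in>{0..n}. assoc_f1 n M i \<in> {0..n}"
  proof
    fix i assume "i \<in> {0..n}"
    show "assoc_f1 n M i \<in> {0..n}"
    proof (cases "assoc_f1 n M i = 0")
      case False then show ?thesis using nz[OF False] by simp
    qed simp
  qed
  have f2m: "\<forall>i\<in>{0..n}. assoc_f2 v n M i \<noteq> -\<infinity>"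
  proof
    fix i assume "i \<in> {0..n}"
    show "assoc_f2 v n M i \<noteq> -\<infinity>"
    proof (cases "assoc_f1 n M i = 0")
      case True then show ?thesis using f2inf by simp
    next
      case False then show ?thesis using f2eq vnmi[OF val] by simp
    qed
  qed
  have f2z: "\<forall>i\<in>{0..n}. assoc_f1 n M i \<noteq> 0 \<longrightarrow> assoc_f2 v n M i = 0"
  proof (intro ballI impI)
    fix i assume "assoc_f1 n M i \<noteq> 0"
    note q = nz[OF this]
    then have "M i (assoc_f1 n M i) = 1" using h by blast
    then show "assoc_f2 v n M i = 0" using f2eq[OF \<open>assoc_f1 n M i \<noteq> 0\<close>] v1[OF val] by simp
  qed
  have am: "assoc_matrix v n (assoc_f1 n M) (assoc_f2 v n M) M"
    unfolding assoc_matrix_def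
  proof (rule conjI; intro ballI)
    fix i assume i: "i \<in> {1..n}"
    show "assoc_f2 v n M i \<in> range v"
    proof (cases "assoc_f1 n M i = 0")
      case True
      have "v 0 = \<infinity>" using val unfolding nonarch_val_def by blast
      then show ?thesis using f2inf[OF True] by (metis rangeI)
    next
      case False then show ?thesis using f2eq by simp
    qed
  next
    fix i j assume i: "i \<in> {1..n}" and j: "j \<in> {1..n}"
    show "(assoc_f1 n M i = j \<longrightarrow> v (M i j) = assoc_f2 v n M i) \<and> (assoc_f1 n M i \<noteq> j \<longrightarrow> M i j = 0)"
    proof (intro conjI impI)
      assume "assoc_f1 n M i = j"
      then show "v (M i j) = assoc_f2 v n M i" using f2eq j by auto
    next
      assume ne: "assoc_f1 n M i \<noteq> j"
      show "M i j = 0"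
      proof (rule ccontr)
        assume "M i j \<noteq> 0"
        then have "assoc_f1 n M i = j" using thej i j by blast
        then show False using ne by simp
      qed
    qed
  qed
  interpret indsetup n r \<mu> "assoc_f1 n M" "assoc_f2 v n M"
    using mu f1r f2m f2z by unfold_locales auto
  show "trop_induced n r \<mu> (assoc_f1 n M) (assoc_f2 v n M) = tmult_set v n M (trop_bar {1..n} r \<mu>)"
    using part1[OF val am] .
qed


end
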